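(* For every integer $r\ge 1$, $$\sum_{n=1}^{\infty}\frac{n4^n}{(2n-1)^2(4n+2r-1)}\frac{\binom{2n}{n}}{\binom{4n+2r-2}{2n+r-1}}=\sqrt{2}\sum_{k=0}^{r}\frac{(-1)^k}{(2k+1)2^{2r-k-1}}\binom{r}{k}\mathcal{B}(k),$$ where $\mathcal{B}(k)=\int_0^{1/2}\frac{t^k}{\sqrt{1-t}}\,\mathrm{d}t$. *)

theory Defs
  imports "HOL-Analysis.Analysis"
begin

definition calB :: "nat \<Rightarrow> real" where
  "calB k = integral {0..1/2} (\<lambda>t. t ^ k / sqrt (1 - t))"

end

theory Submission imports Defs begin

definition psi :: "nat \<Rightarrow> real \<Rightarrow> real" where
  "psi r s = (\<Sum>k\<le>r. (-1)^k * real (r choose k) * s^(2*k+1) / real (2*k+1))"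

lemma psi_deriv: "(psi r has_real_derivative (1 - s^2)^r) (at s)"
proof -
  have "(psi r has_real_derivative (\<Sum>k\<le>r. (-1)^k * real (r choose k) * (real (2*k+1) * s^(2*k)) / real (2*k+1))) (at s)"
    unfolding psi_def
  proof (rule DERIV_sum, rule DERIV_cdivide, rule DERIV_cmult)
    fix k
    show "((\<lambda>s. s^(2*k+1)) has_real_derivative real (2*k+1) * s^(2*k)) (at s)"
      using DERIV_pow[of "2*k+1" s] by simp
  qed
  also have "(\<Sum>k\<le>r. (-1)^k * real (r choose k) * (real (2*k+1) * s^(2*k)) / real (2*k+1)) = (\<Sum>k\<le>r. real (r choose k) * (-(s^2))^k * 1^(r-k))"
  proof (rule sum.cong[OF refl])
    fix k assume "k \<in> {..r}"
    have e: "(-(s^2))^k = (-1)^k * s^(2*k)"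
      by (metis mult_minus1 power_mult power_mult_distrib)
    have nz: "real (2*k+1) \<noteq> 0" by simp
    show "(-1)^k * real (r choose k) * (real (2*k+1) * s^(2*k)) / real (2*k+1) = real (r choose k) * (-(s^2))^k * 1^(r-k)"
      unfolding e using nz by (simp only: power_one mult_1_right) (simp add: field_simps)
  qed
  also have "\<dots> = (-(s^2) + 1)^r" by (rule binomial_ring[symmetric])
  finally show ?thesis by simp
qed

lemma psi0 [simp]: "psi r 0 = 0" by (simp add: psi_def)

lemma psi_nonneg: assumes "0 \<le> s" "s \<le> 1" shows "0 \<le> psi r s"
proof -
  have "psi r 0 \<le> psi r s"
    apply (rule DERIV_nonneg_imp_nondecreasing[OF assms(1)])
    subgoal for x
      using assms by (auto intro!: exI[of _ "(1 - x^2)^r"] psi_deriv simp: abs_square_le_1)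
    done
  thus ?thesis by simp
qed

lemma d_omsq: "((\<lambda>x::real. 1 - x^2) has_real_derivative (-2*x)) (at x)"
  by (auto intro!: derivative_eq_intros)

lemma d_pow_suc: "((\<lambda>x::real. (1 - x^2)^Suc n) has_real_derivative (1 + real n) * ((-2*x) * (1-x^2)^n)) (at x)"
  by (rule DERIV_power_Suc[OF d_omsq])

definition II :: "nat \<Rightarrow> real" where "II p = 4^p * fact p ^ 2 / fact (2*p+1)"

lemma wallis: "((\<lambda>s. (1 - s^2)^p) has_integral II p) {0..1::real}"
proof (induction p)
  case 0
  then show ?case using has_integral_const_real[of "1::real" 0 1] by (simp add: II_def)
next
  case (Suc p)
  let ?F = "\<lambda>s::real. s * (1 - s^2)^Suc p"
  let ?F' = "\<lambda>s::real. real (2*p+3) * (1 - s^2)^Suc p - real (2*(p+1)) * (1 - s^2)^p"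
  have d: "(?F has_real_derivative ?F' x) (at x)" for x
    using DERIV_mult[OF DERIV_ident d_pow_suc[of p x]]
    by (rule DERIV_cong) (simp add: algebra_simps power2_eq_square)
  have "(?F' has_integral (?F 1 - ?F 0)) {0..1}"
  proof (rule fundamental_theorem_of_calculus)
    fix x :: real assume "x \<in> {0..1}"
    show "(?F has_vector_derivative ?F' x) (at x within {0..1})"
      using has_field_derivative_at_within[OF d] unfolding has_real_derivative_iff_has_vector_derivative .
  qed simp
  hence h1: "(?F' has_integral 0) {0..1}" by simp
  have h2: "((\<lambda>s. real (2*(p+1)) * (1 - s^2)^p) has_integral real (2*(p+1)) * II p) {0..1}"
    using Suc.IH by (rule has_integral_mult_right)
  have "((\<lambda>s. ?F' s + real (2*(p+1)) * (1 - s^2)^p) has_integral (0 + real (2*(p+1)) * II p)) {0..1}"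
    by (rule has_integral_add[OF h1 h2])
  hence "((\<lambda>s. real (2*p+3) * (1 - s^2)^(p+1)) has_integral (real (2*(p+1)) * II p)) {0..1}"
    by simp
  hence intf: "((\<lambda>s. (1 / real (2*p+3)) * (real (2*p+3) * (1 - s^2)^(p+1))) has_integral (1 / real (2*p+3)) * (real (2*(p+1)) * II p)) {0..1}"
    by (rule has_integral_mult_right)
  have eqV: "(1 / real (2*p+3)) * (real (2*(p+1)) * II p) = II (Suc p)"
  proof -
    have f1: "(fact (2 * Suc p + 1) :: real) = (2*real p+3) * (2*real p+2) * fact (2*p+1)"
      by (simp add: fact_Suc algebra_simps)
    have f2: "(fact (Suc p) :: real) = (real p+1) * fact p" by (simp add: fact_Suc algebra_simps)
    have g: "(1 / real (2*p+3)) * (real (2*(p+1)) * (4^p * F^2 / A)) = 4^Suc p * ((real p+1)*F)^2 / ((2*real p+3)*(2*real p+2)*A)"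
      if "A > 0" for A F :: real
    proof -
      have h0: "0 < (6::real) + (real p * 10 + real p * (real p * 4))"
        by (intro add_pos_nonneg) auto
      hence h: "(6::real) + (real p * 10 + real p * (real p * 4)) \<noteq> 0" by linarith
      show ?thesis using that h by (simp add: divide_simps power2_eq_square) (simp add: algebra_simps)
    qed
    show ?thesis unfolding II_def f1 f2
      by (rule g) simp
  qed
  have eqL: "(\<lambda>s::real. (1 / real (2*p+3)) * (real (2*p+3) * (1 - s^2)^(p+1))) = (\<lambda>s. (1 - s^2)^Suc p)"
    by (rule ext) simp
  show ?case using intf unfolding eqL eqV .
qed

lemma ftc01:
  assumes "\<And>x. (F has_real_derivative F' x) (at x)"
  shows "(F' has_integral (F 1 - F 0)) {0..1::real}"
proof (rule fundamental_theorem_of_calculus)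
  fix x :: real assume "x \<in> {0..1}"
  show "(F has_vector_derivative F' x) (at x within {0..1})"
    using has_field_derivative_at_within[OF assms] unfolding has_real_derivative_iff_has_vector_derivative .
qed simp

lemma ibp: "((\<lambda>s. psi r s * (2 * s) * (1-s^2)^(2*m)) has_integral (II (r+2*m+1) / real (2*m+1))) {0..1}"
proof -
  let ?H = "\<lambda>s::real. psi r s * (1-s^2)^Suc (2*m)"
  let ?H' = "\<lambda>s::real. (1-s^2)^r * (1-s^2)^Suc (2*m) + (1 + real (2*m)) * ((-2 * s) * (1-s^2)^(2*m)) * psi r s"
  have d: "(?H has_real_derivative ?H' x) (at x)" for x
    by (rule DERIV_mult[OF psi_deriv d_pow_suc])
  have h1: "(?H' has_integral 0) {0..1}"
    using ftc01[of ?H ?H', OF d] by simp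
  have h2: "((\<lambda>s. (1 - s^2)^(r+2*m+1)) has_integral II (r+2*m+1)) {0..1}"
    by (rule wallis)
  have h3: "((\<lambda>s. (1 - s^2)^(r+2*m+1) - ?H' s) has_integral (II (r+2*m+1) - 0)) {0..1}"
    by (rule has_integral_diff[OF h2 h1])
  have h4: "((\<lambda>s. (1 / real (2*m+1)) * ((1 - s^2)^(r+2*m+1) - ?H' s)) has_integral (1 / real (2*m+1)) * (II (r+2*m+1) - 0)) {0..1}"
    by (rule has_integral_mult_right[OF h3])
  have gen: "(1 / real (k+1)) * (A - (A + (1 + real k) * ((-2*x) * B) * P)) = P * (2 * x) * B" for k and A B P x :: real
  proof -
    have "real (k+1) \<noteq> 0" by simp
    thus ?thesis by (simp add: field_simps)
  qed
  have pw: "(1-s^2)^(r+2*m+1) = (1-s^2)^r * (1-s^2)^Suc (2*m)" for s :: real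
    by (metis power_add add_Suc_right Suc_eq_plus1 add.assoc)
  have eq: "(1 / real (2*m+1)) * ((1 - s^2)^(r+2*m+1) - ?H' s) = psi r s * (2 * s) * (1-s^2)^(2*m)" for s :: real
    unfolding pw by (rule gen)
  show ?thesis using h4 unfolding eq by simp
qed

definition dd :: "nat \<Rightarrow> real" where "dd m = real ((2*m) choose m) / 4^m"

lemma dd_nonneg: "0 \<le> dd m" by (simp add: dd_def)

lemma central_rec: "real ((2*Suc m) choose Suc m) * real (Suc m) = 2 * real (2*m+1) * real ((2*m) choose m)"
proof -
  have a: "real ((2*Suc m) choose Suc m) = fact (2*Suc m) / (fact (Suc m) * fact (Suc m))"
    using binomial_fact[of "Suc m" "2*Suc m"] by simp
  have b: "real ((2*m) choose m) = fact (2*m) / (fact m * fact m)"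
    using binomial_fact[of m "2*m"] by simp
  have c: "(fact (2*Suc m) :: real) = (2*real m+2) * (2*real m+1) * fact (2*m)"
    by (simp add: fact_Suc algebra_simps)
  have d: "(fact (Suc m) :: real) = (real m+1) * fact m"
    by (simp add: fact_Suc algebra_simps)
  have g: "(2*real m+2) * (2*real m+1) * A / ((real m+1) * F * ((real m+1) * F)) * real (Suc m) = 2 * real (2*m+1) * (A / (F * F))"
    if "F > 0" for A F :: real
  proof -
    have "real m + 1 \<noteq> 0" by (simp add: add_nonneg_pos)
    moreover have "F \<noteq> 0" using that by simp
    ultimately show ?thesis by (simp add: divide_simps) (simp add: algebra_simps)
  qed
  show ?thesis unfolding a b c d by (rule g) simp
qed

lemma dser: "((-1/2::real) gchoose m) * (-1)^m = dd m"
proof (induction m)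
  case 0
  then show ?case by (simp add: dd_def)
next
  case (Suc m)
  have s1: "(a gchoose Suc k) = (a gchoose k) * (a - real k) / real (Suc k)" for a :: real and k
  proof -
    have "real (Suc k) * (a gchoose Suc k) = (a - real k) * (a gchoose k)"
      using gbinomial_absorption[of k a] gbinomial_absorb_comp[of a k] by simp
    thus ?thesis by (simp add: field_simps del: of_nat_Suc)
  qed
  have "((-1/2::real) gchoose Suc m) * (-1)^Suc m = (((-1/2::real) gchoose m) * (-1)^m) * ((1/2 + real m) / real (Suc m))"
    unfolding s1 by (simp add: field_simps)
  also have "\<dots> = dd m * ((1/2 + real m) / real (Suc m))" using Suc.IH by simp
  also have "\<dots> = dd (Suc m)"
  proof -
    have e: "real ((2*Suc m) choose Suc m) = 2 * real (2*m+1) * real ((2*m) choose m) / real (Suc m)"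
      by (rule eq_divide_imp[OF _ central_rec]) simp
    have g: "C / 4^m * ((1/2 + real m) / real (Suc m)) = 2 * real (2*m+1) * C / real (Suc m) / 4^Suc m" for C :: real
      by (simp add: field_simps del: of_nat_Suc) (simp add: algebra_simps)
    show ?thesis unfolding dd_def e by (rule g)
  qed
  finally show ?case .
qed


lemma bin_series:
  assumes "0 < s" "s \<le> (1::real)"
  shows "(\<lambda>m. dd m * (1-s^2)^(2*m)) sums (1 / (s * sqrt (2 - s^2)))"
proof -
  have s2: "0 < s^2" "s^2 \<le> 1" using assms by (auto simp: power_le_one)
  have z: "\<bar>-((1-s^2)^2)\<bar> < 1"
  proof -
    have "0 \<le> 1 - s^2" "1 - s^2 < 1" using s2 by auto
    hence "(1-s^2)^2 < 1" by (simp add: power_less_one_iff)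
    thus ?thesis by simp
  qed
  from gen_binomial_real[OF z, of "-1/2"]
  have "(\<lambda>n. ((-1/2) gchoose n) * (-((1-s^2)^2))^n) sums (1 + -((1-s^2)^2)) powr (-1/2)" .
  moreover have "((-1/2) gchoose n) * (-((1-s^2)^2))^n = dd n * (1-s^2)^(2*n)" for n
  proof -
    have "(-((1-s^2)^2))^n = (-1)^n * (1-s^2)^(2*n)"
      by (metis mult_minus1 power_mult power_mult_distrib)
    thus ?thesis using dser[of n] by (simp add: algebra_simps)
  qed
  moreover have "(1 + -((1-s^2)^2)) powr (-1/2) = 1 / (s * sqrt (2 - s^2))"
  proof -
    have Y: "1 + -((1-s^2)^2) = s^2 * (2 - s^2)"
      by (simp add: power2_eq_square algebra_simps)
    have Ypos: "0 < s^2 * (2 - s^2)" using s2 by simp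
    have h: "(-1/2::real) = -(1/2)" by simp
    have "(s^2 * (2 - s^2)) powr (-1/2) = 1 / sqrt (s^2 * (2 - s^2))"
      unfolding h powr_minus_divide using Ypos by (simp add: powr_half_sqrt)
    also have "sqrt (s^2 * (2 - s^2)) = s * sqrt (2 - s^2)"
      using assms by (simp add: real_sqrt_mult)
    finally show ?thesis unfolding Y .
  qed
  ultimately show ?thesis by (simp only:)
qed


lemma psi_cont: "continuous_on A (psi r)"
  by (rule continuous_at_imp_continuous_on) (metis DERIV_isCont psi_deriv)

definition gg :: "nat \<Rightarrow> real \<Rightarrow> real" where "gg r s = 2 * (psi r s / sqrt (2 - s^2))"

lemma sqrt_pos01: "s \<in> {0..1} \<Longrightarrow> 0 < sqrt (2 - s^2)"
proof -
  assume "s \<in> {0..1}"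
  hence "s^2 \<le> 1" by (auto simp: power_le_one)
  thus ?thesis by simp
qed

lemma gg_cont: "continuous_on {0..1} (gg r)"
  unfolding gg_def
  by (intro continuous_intros psi_cont) (use sqrt_pos01 in force)

lemma term_nonneg: "s \<in> {0..1} \<Longrightarrow> 0 \<le> dd m * (psi r s * (2 * s) * (1-s^2)^(2*m))"
proof -
  assume s: "s \<in> {0..1}"
  hence "s^2 \<le> 1" by (auto simp: power_le_one)
  thus ?thesis using s psi_nonneg[of s r] dd_nonneg[of m] by (auto intro!: mult_nonneg_nonneg)
qed

lemma main_series: "(\<lambda>m. dd m * (II (r+2*m+1) / real (2*m+1))) sums integral {0..1} (gg r)"
proof -
  define f where "f k s = (\<Sum>m<k. dd m * (psi r s * (2 * s) * (1-s^2)^(2*m)))" for k s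
  have fint: "(f k has_integral (\<Sum>m<k. dd m * (II (r+2*m+1) / real (2*m+1)))) {0..1}" for k
    unfolding f_def by (intro has_integral_sum[OF finite_lessThan] has_integral_mult_right ibp)
  have ggint: "gg r integrable_on {0..1}"
    by (rule integrable_continuous_interval[OF gg_cont])
  have conv: "(\<lambda>m. dd m * (psi r s * (2 * s) * (1-s^2)^(2*m))) sums gg r s" if "0 < s" "s \<le> 1" for s
  proof -
    have "(\<lambda>m. (psi r s * (2 * s)) * (dd m * (1-s^2)^(2*m))) sums ((psi r s * (2 * s)) * (1 / (s * sqrt (2 - s^2))))"
      by (rule sums_mult[OF bin_series[OF that]])
    moreover have "(psi r s * (2 * s)) * (1 / (s * sqrt (2 - s^2))) = gg r s"
      using that unfolding gg_def by simp
    ultimately show ?thesis by (simp add: ac_simps)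
  qed
  have lim: "(\<lambda>k. f k s) \<longlonglongrightarrow> gg r s" if "s \<in> {0..1}" for s
  proof (cases "s = 0")
    case True
    then show ?thesis by (simp add: f_def gg_def)
  next
    case False
    with that have "0 < s" "s \<le> 1" by auto
    from conv[OF this] show ?thesis unfolding sums_def f_def .
  qed
  have le: "f k s \<le> gg r s" if "s \<in> {0..1}" for k s
  proof (cases "s = 0")
    case True
    then show ?thesis by (simp add: f_def gg_def)
  next
    case False
    with that have s: "0 < s" "s \<le> 1" by auto
    have "f k s \<le> (\<Sum>m. dd m * (psi r s * (2 * s) * (1-s^2)^(2*m)))"
      unfolding f_def
      by (rule sum_le_suminf[OF sums_summable[OF conv[OF s]] finite_lessThan]) (use term_nonneg that in auto)
    also have "\<dots> = gg r s" using sums_unique[OF conv[OF s]] by simp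
    finally show ?thesis .
  qed
  have mono: "f k s \<le> f (Suc k) s" if "s \<in> {0..1}" for k s
    unfolding f_def using term_nonneg[OF that, of k r] by simp
  have "gg r integrable_on {0..1} \<and> (\<lambda>k. integral {0..1} (f k)) \<longlonglongrightarrow> integral {0..1} (gg r)"
  proof (rule monotone_convergence_increasing)
    show "f k integrable_on {0..1}" for k using fint by blast
    show "f k x \<le> f (Suc k) x" if "x \<in> {0..1}" for k x using mono that .
    show "(\<lambda>k. f k x) \<longlonglongrightarrow> gg r x" if "x \<in> {0..1}" for x using lim that .
    show "bounded (range (\<lambda>k. integral {0..1} (f k)))"
      unfolding bounded_real
    proof (intro exI ballI)
      fix y assume "y \<in> range (\<lambda>k. integral {0..1} (f k))"
      then obtain k where y: "y = integral {0..1} (f k)" by auto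
      have "0 \<le> integral {0..1} (f k)"
        by (rule integral_nonneg) (use fint in blast, unfold f_def, intro sum_nonneg term_nonneg, simp)
      moreover have "integral {0..1} (f k) \<le> integral {0..1} (gg r)"
        by (rule integral_le) (use fint ggint le in blast)+
      ultimately show "\<bar>y\<bar> \<le> integral {0..1} (gg r)" using y by simp
    qed
  qed
  moreover have "(\<lambda>k. integral {0..1} (f k)) = (\<lambda>k. \<Sum>m<k. dd m * (II (r+2*m+1) / real (2*m+1)))"
    using integral_unique[OF fint] by (rule ext)
  ultimately have "(\<lambda>k. \<Sum>m<k. dd m * (II (r+2*m+1) / real (2*m+1))) \<longlonglongrightarrow> integral {0..1} (gg r)"
    by simp
  thus ?thesis unfolding sums_def .
qed


lemma calB_sub: "((\<lambda>s. s * ((s^2/2)^k / sqrt (1 - s^2/2))) has_integral calB k) {0..1}"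
proof -
  have "((\<lambda>x. x *\<^sub>R ((\<lambda>t. t^k / sqrt (1 - t)) ((\<lambda>s. s^2/2) x))) has_integral
        integral {(\<lambda>s::real. s^2/2) 0..(\<lambda>s. s^2/2) 1} (\<lambda>t. t^k / sqrt (1 - t))) {0..1}"
  proof (rule has_integral_substitution[where c = 0 and d = "1/2"])
    show "(\<lambda>s::real. s^2/2) ` {0..1} \<subseteq> {0..1/2}"
      by (auto simp: power_le_one)
    show "continuous_on {0..1/2} (\<lambda>t::real. t^k / sqrt (1 - t))"
      by (intro continuous_intros) auto
    show "((\<lambda>s::real. s^2/2) has_real_derivative x) (at x within {0..1})" if "x \<in> {0..1}" for x
      by (auto intro!: derivative_eq_intros)
  qed auto
  thus ?thesis unfolding calB_def by simp
qed

lemma term_alg: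
  fixes T Q P F C s :: real
  assumes "T * T = 2" "Q > 0" "T > 0" "P * (2 * 2^k) = F" "F > 0"
  shows "T * ((-1)^k / (real (2*k+1) * P) * C * (s * ((s^2/2)^k / (Q / T))))
         = 4 / F * ((-1)^k * C * s^(2*k+1) / real (2*k+1) / Q)"
proof -
  have P: "P = F / (2 * 2^k)" using assms(4) by (simp add: field_simps)
  have sk: "(s^2/2)^k = s^(2*k) / 2^k" by (simp add: power_divide power_mult)
  have s1: "s^(2*k+1) = s * s^(2*k)" by simp
  have "T * ((-1)^k / (real (2*k+1) * P) * C * (s * ((s^2/2)^k / (Q / T))))
        = (T * T) * ((-1)^k * 2 * C * s * s^(2*k) / (real (2*k+1) * F * Q))"
    unfolding P sk using assms by (simp add: field_simps)
  also have "\<dots> = 4 / F * ((-1)^k * C * s^(2*k+1) / real (2*k+1) / Q)"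
    unfolding assms(1) s1 using assms by (simp add: field_simps)
  finally show ?thesis .
qed

lemma rhs_int:
  assumes r: "r \<ge> 1"
  shows "sqrt 2 * (\<Sum>k = 0..r. (-1) ^ k / ((2 * real k + 1) * 2 ^ (2*r - k - 1)) * real (r choose k) * calB k)
         = 4 / 4^r * integral {0..1} (\<lambda>s. psi r s / sqrt (2 - s^2))"
proof -
  let ?c = "\<lambda>k. (-1) ^ k / ((2 * real k + 1) * 2 ^ (2*r - k - 1)) * real (r choose k)"
  have H: "((\<lambda>s. \<Sum>k = 0..r. ?c k * (s * ((s^2/2)^k / sqrt (1 - s^2/2)))) has_integral (\<Sum>k = 0..r. ?c k * calB k)) {0..1}"
    by (intro has_integral_sum has_integral_mult_right calB_sub) simp
  have H2: "((\<lambda>s. sqrt 2 * (\<Sum>k = 0..r. ?c k * (s * ((s^2/2)^k / sqrt (1 - s^2/2))))) has_integral sqrt 2 * (\<Sum>k = 0..r. ?c k * calB k)) {0..1}"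
    by (rule has_integral_mult_right[OF H])
  have pw: "sqrt 2 * (\<Sum>k = 0..r. ?c k * (s * ((s^2/2)^k / sqrt (1 - s^2/2)))) = 4 / 4^r * (psi r s / sqrt (2 - s^2))"
    if s: "s \<in> {0..1}" for s
  proof -
    have Q: "sqrt (1 - s^2/2) = sqrt (2 - s^2) / sqrt 2"
    proof -
      have e: "1 - s^2/2 = (2 - s^2) / 2" by simp
      show ?thesis unfolding e by (rule real_sqrt_divide)
    qed
    have Qpos: "0 < sqrt (2 - s^2)" using sqrt_pos01[OF s] .
    have "sqrt 2 * (\<Sum>k = 0..r. ?c k * (s * ((s^2/2)^k / sqrt (1 - s^2/2))))
          = (\<Sum>k = 0..r. sqrt 2 * (?c k * (s * ((s^2/2)^k / (sqrt (2 - s^2) / sqrt 2)))))"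
      unfolding Q by (simp add: sum_distrib_left)
    also have "\<dots> = (\<Sum>k = 0..r. 4 / 4^r * ((-1)^k * real (r choose k) * s^(2*k+1) / real (2*k+1) / sqrt (2 - s^2)))"
    proof (rule sum.cong[OF refl])
      fix k assume k: "k \<in> {0..r}"
      have P: "(2::real) ^ (2*r - k - 1) * (2 * 2^k) = 4^r"
      proof -
        have "(2::real) ^ (2*r - k - 1) * (2 * 2^k) = 2 ^ ((2*r - k - 1) + (k + 1))"
          by (simp add: power_add)
        also have "(2*r - k - 1) + (k + 1) = 2 * r" using k r by auto
        finally show ?thesis by (simp add: power_mult)
      qed
      have e: "(2 * real k + 1) = real (2*k+1)" by simp
      show "sqrt 2 * (?c k * (s * ((s^2/2)^k / (sqrt (2 - s^2) / sqrt 2))))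
            = 4 / 4^r * ((-1)^k * real (r choose k) * s^(2*k+1) / real (2*k+1) / sqrt (2 - s^2))"
        unfolding e by (rule term_alg[OF _ Qpos _ P]) simp_all
    qed
    also have "\<dots> = 4 / 4^r * (psi r s / sqrt (2 - s^2))"
      unfolding psi_def by (simp add: sum_distrib_left sum_divide_distrib atMost_atLeast0)
    finally show ?thesis .
  qed
  have H3: "((\<lambda>s. 4 / 4^r * (psi r s / sqrt (2 - s^2))) has_integral sqrt 2 * (\<Sum>k = 0..r. ?c k * calB k)) {0..1}"
    by (rule has_integral_eq[OF pw H2]) 
  have int0: "(\<lambda>s. psi r s / sqrt (2 - s^2)) integrable_on {0..1}"
    by (rule integrable_continuous_interval) (intro continuous_intros psi_cont, use sqrt_pos01 in force)
  have H4: "((\<lambda>s. 4 / 4^r * (psi r s / sqrt (2 - s^2))) has_integral 4 / 4^r * integral {0..1} (\<lambda>s. psi r s / sqrt (2 - s^2))) {0..1}"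
    by (rule has_integral_mult_right[OF integrable_integral[OF int0]])
  show ?thesis using has_integral_unique[OF H3 H4] .
qed


lemma alg_final:
  fixes M R X Y C0 Fp F2p :: real
  assumes "M \<ge> 0" "R \<ge> 0" "X > 0" "Y > 0" "Fp > 0" "F2p > 0"
  shows "(M + 1) * (4 * X) / ((2 * (M + 1) - 1)^2 * (4 * (M + 1) + 2 * R - 1)) *
           ((2 * (2 * M + 1) * C0 / (M + 1)) / (F2p / (Fp * Fp)))
         = 2 / Y * (C0 / X * ((Y * 4 * X * X) * Fp^2 / ((2 * (R + 2 * M + 1) + 1) * F2p) / (2 * M + 1)))"
proof -
  have a: "M + 1 > 0" "2 * M + 1 > 0" "4 * M + 2 * R + 3 > 0" using assms by auto
  have b: "2 * (M + 1) - 1 = 2 * M + 1" "4 * (M + 1) + 2 * R - 1 = 4 * M + 2 * R + 3"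
     "2 * (R + 2 * M + 1) + 1 = 4 * M + 2 * R + 3" by simp_all
  show ?thesis unfolding b using a assms
    by (simp add: divide_simps power2_eq_square)
qed

lemma term_eq:
  "(let n = m + 1 in (real n * 4 ^ n / ((2 * real n - 1)^2 * (4 * real n + 2 * real r - 1)))
            * (real (2*n choose n) / real ((4*n + 2*r - 2) choose (2*n + r - 1))))
   = 2 / 4^r * (dd m * (II (r+2*m+1) / real (2*m+1)))"
proof -
  define p where "p = r + 2*m + 1"
  have n1: "4*(m+1) + 2*r - 2 = 2*p" "2*(m+1) + r - 1 = p" unfolding p_def by simp_all
  have C1: "real ((2*p) choose p) = fact (2*p) / (fact p * fact p)"
    using binomial_fact[of p "2*p"] by (simp add: mult_2)
  have C2: "real ((2*(m+1)) choose (m+1)) = 2 * real (2*m+1) * real ((2*m) choose m) / real (Suc m)"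
    using eq_divide_imp[OF _ central_rec[of m]] by simp
  have F: "(fact (2*p+1) :: real) = (2 * real p + 1) * fact (2*p)"
    by (simp add: fact_Suc algebra_simps)
  have P4: "(4::real)^p = 4^r * 4 * 4^m * 4^m"
    unfolding p_def by (simp add: power_add power_mult algebra_simps power2_eq_square)
  have Pr: "real p = real r + 2 * real m + 1" unfolding p_def by simp
  have "(let n = m + 1 in (real n * 4 ^ n / ((2 * real n - 1)^2 * (4 * real n + 2 * real r - 1)))
            * (real (2*n choose n) / real ((4*n + 2*r - 2) choose (2*n + r - 1))))
        = (real m + 1) * (4 * 4^m) / ((2 * (real m + 1) - 1)^2 * (4 * (real m + 1) + 2 * real r - 1)) *
           ((2 * (2 * real m + 1) * real ((2*m) choose m) / (real m + 1)) / (fact (2*p) / (fact p * fact p)))"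
    unfolding Let_def n1 C1 C2 by simp
  also have "\<dots> = 2 / 4^r * (real ((2*m) choose m) / 4^m * ((4^r * 4 * 4^m * 4^m) * fact p^2 / ((2 * (real r + 2 * real m + 1) + 1) * fact (2*p)) / (2 * real m + 1)))"
    by (rule alg_final) simp_all
  also have "\<dots> = 2 / 4^r * (dd m * (II (r+2*m+1) / real (2*m+1)))"
    unfolding dd_def II_def p_def[symmetric] F P4 Pr by simp
  finally show ?thesis .
qed

theorem theorem3p0p4:
  fixes r :: nat
  assumes "r \<ge> 1"
  shows "(\<lambda>m. let n = m + 1 in
            (real n * 4 ^ n / ((2 * real n - 1)^2 * (4 * real n + 2 * real r - 1)))
            * (real (2*n choose n) / real ((4*n + 2*r - 2) choose (2*n + r - 1))))
         sums (sqrt 2 * (\<Sum>k = 0..r. (-1) ^ k / ((2 * real k + 1) * 2 ^ (2*r - k - 1))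
                         * real (r choose k) * calB k))"
proof -
  have "(\<lambda>m. 2 / 4^r * (dd m * (II (r+2*m+1) / real (2*m+1)))) sums (2 / 4^r * integral {0..1} (gg r))"
    by (rule sums_mult[OF main_series])
  moreover have "integral {0..1} (gg r) = 2 * integral {0..1} (\<lambda>s. psi r s / sqrt (2 - s^2))"
    unfolding gg_def by (rule integral_mult_right)
  ultimately have "(\<lambda>m. 2 / 4^r * (dd m * (II (r+2*m+1) / real (2*m+1)))) sums (4 / 4^r * integral {0..1} (\<lambda>s. psi r s / sqrt (2 - s^2)))"
    by simp
  thus ?thesis unfolding term_eq rhs_int[OF assms] .
qed

end
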